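(* Let $F:\mathcal{G}_{\Sigma,\Delta,\pi}\to\mathcal{G}_{\Sigma,\Delta,\pi}$ be a causal graph dynamics with a monotonic local rule $f$ of radius $r$, and assume that $\mathrm{Conj}_F(R)$ is a singleton $\{\overline{F}(R)\}$ for every renaming $R$. Let $\widetilde{F}:\mathbf{G}_{\Sigma,\Delta,\pi}\to\mathbf{G}_{\Sigma,\Delta,\pi}$ be the functor with $\widetilde{F}(G)=F(G)$ and, for $m:G\to H$, $\widetilde{F}(m):F(G)\to F(H)$ the morphism with $|\widetilde{F}(m)|=\overline{F}(|m|)$. Then $\widetilde{F}$ is the pointwise left Kan extension of $\widetilde{f}$ along $\widetilde{i}$, i.e. $\widetilde{F}\cong\mathrm{Colim}(\widetilde{f}\circ\mathrm{Proj}_{\widetilde{i}/-})$.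
   Context: Fix an uncountably infinite set $\mathcal{V}$, sets $\Sigma,\Delta$, finite $\pi$. Graphs: countable $V(G)\subset\mathcal{V}$, a set $E(G)$ of pairwise disjoint two-element subsets of $V(G)\times\pi$, partial labelings $\sigma(G),\delta(G)$; $\subseteq$ is componentwise inclusion. Renamings: bijections of $\mathcal{V}$ acting naturally on graphs and pointed graphs. $\mathrm{Conj}_F(R)=\{R'\mid F\circ R=R'\circ F\}$. Disk $G^r_c$: vertices at distance $\le r+1$ from $c$, edges with an endpoint at distance $\le r$, vertex labels restricted to distance $\le r$; $\mathcal{D}^r$ the radius-$r$ disks, compared by inclusion with equal centers. A local rule of radius $r$: $f:\mathcal{D}^r\to$ graphs with renaming covariance, preservation of empty intersections, bounded output size, consistency of $f(G^r_u),f(G^r_v)$; CGD $F(G)=\bigcup_{v\in V(G)}f(G^r_v)$. Category $\mathbf{G}_{\Sigma,\Delta,\pi}$: objects graphs, morphism $m:G\to H$ a renaming $|m|$ with $|m|(G)\subseteq H$, composition by composition of renamings. Category $\mathbf{D}^r_{\Sigma,\Delta,\pi}$: objects $(H,\{c\})$ for $(H,c)\in\mathcal{D}^r$ and $(\varnothing,\emptyset)$; morphisms $m:(H_1,C_1)\to(H_2,C_2)$ are morphisms $H_1\to H_2$ with $|m|(C_1)\subseteq C_2$. $\widetilde{i}:\mathbf{D}^r\to\mathbf{G}$ drops the second component (identity on morphisms). $\widetilde{f}:\mathbf{D}^r\to\mathbf{G}$: $\widetilde{f}((H,\{c\}))=f((H,c))$, $\widetilde{f}((\varnothing,\emptyset))=\varnothing$,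 $|\widetilde{f}(m)|=\overline{F}(|m|)$. For a graph $G$, $\widetilde{i}/G$ is the comma category (objects $((H,C),m:H\to G)$, morphisms $n:((H_1,C_1),m\circ n)\to((H_2,C_2),m)$) with projection $\mathrm{Proj}_{\widetilde{i}/G}$ to $\mathbf{D}^r$; $\widetilde{i}/-$ is functorial in $G$ by postcomposition. Given functors $i:\mathbf{A}\to\mathbf{B}$, $f:\mathbf{A}\to\mathbf{C}$, a pointwise left Kan extension of $f$ along $i$ is a functor $\Phi:\mathbf{B}\to\mathbf{C}$ with $\Phi\cong\mathrm{Colim}(f\circ\mathrm{Proj}_{i/-})$. *)

theory Defs
  imports Main "HOL-Library.Countable_Set"
begin

text \<open>Vertex names range over a type 'v (standing for the uncountable set V),
ports over 'p (finite), vertex labels over 's (Sigma), edge labels over 'd (Delta).\<close>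

record ('v,'p,'s,'d) graph =
  gV :: "'v set"
  gE :: "('v \<times> 'p) set set"
  gsig :: "'v \<Rightarrow> 's option"
  gdel :: "('v \<times> 'p) set \<Rightarrow> 'd option"

definition wf_graph :: "('v,'p,'s,'d) graph \<Rightarrow> bool" where
  "wf_graph G \<longleftrightarrow>
     countable (gV G) \<and>
     (\<forall>e\<in>gE G. \<exists>a b. a \<noteq> b \<and> e = {a, b} \<and> fst a \<in> gV G \<and> fst b \<in> gV G) \<and>
     (\<forall>e1\<in>gE G. \<forall>e2\<in>gE G. e1 \<noteq> e2 \<longrightarrow> e1 \<inter> e2 = {}) \<and>
     dom (gsig G) \<subseteq> gV G \<and> dom (gdel G) \<subseteq> gE G"

definition empty_graph :: "('v,'p,'s,'d) graph" where
  "empty_graph = \<lparr>gV = {}, gE = {}, gsig = Map.empty, gdel = Map.empty\<rparr>"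

definition subgraph :: "('v,'p,'s,'d) graph \<Rightarrow> ('v,'p,'s,'d) graph \<Rightarrow> bool" where
  "subgraph G H \<longleftrightarrow> gV G \<subseteq> gV H \<and> gE G \<subseteq> gE H \<and>
     gsig G \<subseteq>\<^sub>m gsig H \<and> gdel G \<subseteq>\<^sub>m gdel H"

definition graph_Union :: "('v,'p,'s,'d) graph set \<Rightarrow> ('v,'p,'s,'d) graph" where
  "graph_Union S = \<lparr>gV = \<Union>(gV ` S), gE = \<Union>(gE ` S),
     gsig = (\<lambda>v. if \<exists>G\<in>S. gsig G v \<noteq> None
                 then gsig (SOME G. G \<in> S \<and> gsig G v \<noteq> None) v else None),
     gdel = (\<lambda>e. if \<exists>G\<in>S. gdel G e \<noteq> None
                 then gdel (SOME G. G \<in> S \<and> gdel G e \<noteq> None) e else None)\<rparr>"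

definition consistent :: "('v,'p,'s,'d) graph \<Rightarrow> ('v,'p,'s,'d) graph \<Rightarrow> bool" where
  "consistent G H \<longleftrightarrow>
     (\<forall>x. gsig G x \<noteq> None \<and> gsig H x \<noteq> None \<longrightarrow> gsig G x = gsig H x) \<and>
     (\<forall>e. gdel G e \<noteq> None \<and> gdel H e \<noteq> None \<longrightarrow> gdel G e = gdel H e) \<and>
     (\<forall>e\<in>gE G. \<forall>e'\<in>gE H. e = e' \<or> e \<inter> e' = {})"

definition rename :: "('v \<Rightarrow> 'v) \<Rightarrow> ('v,'p,'s,'d) graph \<Rightarrow> ('v,'p,'s,'d) graph" where
  "rename R G = \<lparr>gV = R ` gV G,
     gE = (\<lambda>e. (\<lambda>(v,p). (R v, p)) ` e) ` gE G,
     gsig = (\<lambda>v. gsig G (inv R v)),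
     gdel = (\<lambda>e. gdel G ((\<lambda>(v,p). (inv R v, p)) ` e))\<rparr>"

definition rename_pt :: "('v \<Rightarrow> 'v) \<Rightarrow> ('v,'p,'s,'d) graph \<times> 'v \<Rightarrow> ('v,'p,'s,'d) graph \<times> 'v" where
  "rename_pt R D = (rename R (fst D), R (snd D))"

definition adj_rel :: "('v,'p,'s,'d) graph \<Rightarrow> ('v \<times> 'v) set" where
  "adj_rel G = {(u, v). u \<in> gV G \<and> v \<in> gV G \<and> (\<exists>p q. {(u,p), (v,q)} \<in> gE G)}"

definition dist_le :: "('v,'p,'s,'d) graph \<Rightarrow> 'v \<Rightarrow> nat \<Rightarrow> 'v \<Rightarrow> bool" where
  "dist_le G c n v \<longleftrightarrow> c \<in> gV G \<and> (\<exists>k\<le>n. (c, v) \<in> (adj_rel G) ^^ k)"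

definition disk :: "nat \<Rightarrow> ('v,'p,'s,'d) graph \<Rightarrow> 'v \<Rightarrow> ('v,'p,'s,'d) graph" where
  "disk r G c = \<lparr>gV = {v \<in> gV G. dist_le G c (Suc r) v},
     gE = {e \<in> gE G. \<exists>(v,p)\<in>e. dist_le G c r v},
     gsig = gsig G |` {v. dist_le G c r v},
     gdel = gdel G |` {e \<in> gE G. \<exists>(v,p)\<in>e. dist_le G c r v}\<rparr>"

definition disks :: "nat \<Rightarrow> (('v,'p,'s,'d) graph \<times> 'v) set" where
  "disks r = {(disk r G c, c) | G c. wf_graph G \<and> c \<in> gV G}"

definition local_rule :: "nat \<Rightarrow> (('v,'p,'s,'d) graph \<times> 'v \<Rightarrow> ('v,'p,'s,'d) graph) \<Rightarrow> bool" where
  "local_rule r f \<longleftrightarrow>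
     (\<forall>D\<in>disks r. wf_graph (f D)) \<and>
     \<comment> \<open>renaming covariance\<close>
     (\<forall>R. bij R \<longrightarrow> (\<exists>R'. bij R' \<and> (\<forall>D\<in>disks r. f (rename_pt R D) = rename R' (f D)))) \<and>
     \<comment> \<open>preservation of empty intersections\<close>
     (\<forall>D1\<in>disks r. \<forall>D2\<in>disks r. gV (fst D1) \<inter> gV (fst D2) = {} \<longrightarrow> gV (f D1) \<inter> gV (f D2) = {}) \<and>
     \<comment> \<open>bounded output size\<close>
     (\<exists>b::nat. \<forall>D\<in>disks r. finite (gV (f D)) \<and> card (gV (f D)) \<le> b) \<and>
     \<comment> \<open>consistency\<close>
     (\<forall>G. wf_graph G \<longrightarrow> (\<forall>u\<in>gV G. \<forall>v\<in>gV G. consistent (f (disk r G u, u)) (f (disk r G v, v))))"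

definition monotonic_rule :: "nat \<Rightarrow> (('v,'p,'s,'d) graph \<times> 'v \<Rightarrow> ('v,'p,'s,'d) graph) \<Rightarrow> bool" where
  "monotonic_rule r f \<longleftrightarrow>
     (\<forall>D1\<in>disks r. \<forall>D2\<in>disks r. snd D1 = snd D2 \<and> subgraph (fst D1) (fst D2) \<longrightarrow> subgraph (f D1) (f D2))"

definition CGD :: "nat \<Rightarrow> (('v,'p,'s,'d) graph \<times> 'v \<Rightarrow> ('v,'p,'s,'d) graph)
                    \<Rightarrow> ('v,'p,'s,'d) graph \<Rightarrow> ('v,'p,'s,'d) graph" where
  "CGD r f G = graph_Union {f (disk r G v, v) | v. v \<in> gV G}"

definition Conj :: "(('v,'p,'s,'d) graph \<Rightarrow> ('v,'p,'s,'d) graph) \<Rightarrow> ('v \<Rightarrow> 'v) \<Rightarrow> ('v \<Rightarrow> 'v) set" where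
  "Conj F R = {R'. bij R' \<and> (\<forall>G. wf_graph G \<longrightarrow> F (rename R G) = rename R' (F G))}"

record ('o,'m) category =
  Ob :: "'o set"
  Hom :: "'o \<Rightarrow> 'o \<Rightarrow> 'm set"
  Comp :: "'m \<Rightarrow> 'm \<Rightarrow> 'm"   \<comment> \<open>Comp g f = g after f\<close>

definition cocone :: "('o,'m) category \<Rightarrow> ('j,'n) category \<Rightarrow> ('j \<Rightarrow> 'o) \<Rightarrow> ('n \<Rightarrow> 'm)
                       \<Rightarrow> 'o \<Rightarrow> ('j \<Rightarrow> 'm) \<Rightarrow> bool" where
  "cocone C J DO DM X L \<longleftrightarrow> X \<in> Ob C \<and>
     (\<forall>j\<in>Ob J. L j \<in> Hom C (DO j) X) \<and>
     (\<forall>j1\<in>Ob J. \<forall>j2\<in>Ob J. \<forall>n\<in>Hom J j1 j2. Comp C (L j2) (DM n) = L j1)"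

definition is_colimit :: "('o,'m) category \<Rightarrow> ('j,'n) category \<Rightarrow> ('j \<Rightarrow> 'o) \<Rightarrow> ('n \<Rightarrow> 'm)
                       \<Rightarrow> 'o \<Rightarrow> ('j \<Rightarrow> 'm) \<Rightarrow> bool" where
  "is_colimit C J DO DM X L \<longleftrightarrow> cocone C J DO DM X L \<and>
     (\<forall>Y M. cocone C J DO DM Y M \<longrightarrow>
        (\<exists>!u. u \<in> Hom C X Y \<and> (\<forall>j\<in>Ob J. Comp C u (L j) = M j)))"

text \<open>Comma category i/b: objects (a, m : i a -> b), morphisms n : (a1, m o i n) -> (a2, m).\<close>
definition comma :: "('oa,'ma) category \<Rightarrow> ('ob,'mb) category \<Rightarrow> ('oa \<Rightarrow> 'ob) \<Rightarrow> ('ma \<Rightarrow> 'mb)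
                      \<Rightarrow> 'ob \<Rightarrow> ('oa \<times> 'mb, 'ma) category" where
  "comma A B iO iM b = \<lparr>Ob = {(a, m). a \<in> Ob A \<and> m \<in> Hom B (iO a) b},
     Hom = (\<lambda>(a1, m1) (a2, m2). {n \<in> Hom A a1 a2. m1 = Comp B m2 (iM n)}),
     Comp = Comp A\<rparr>"

text \<open>Phi is a pointwise left Kan extension of f along i, i.e. Phi is naturally isomorphic
to Colim (f o Proj_{i/-}).  Equivalently (and without choosing colimits): for every
object b there is a colimit cocone of f o Proj_{i/b} with apex Phi b, and these cocones
are natural in b (for g : b -> b', Phi g is the map induced by i/g).\<close>
definition pointwise_lan ::
  "('oa,'ma) category \<Rightarrow> ('ob,'mb) category \<Rightarrow> ('oc,'mc) category
   \<Rightarrow> ('oa \<Rightarrow> 'ob) \<Rightarrow> ('ma \<Rightarrow> 'mb) \<Rightarrow> ('oa \<Rightarrow> 'oc) \<Rightarrow> ('ma \<Rightarrow> 'mc)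
   \<Rightarrow> ('ob \<Rightarrow> 'oc) \<Rightarrow> ('mb \<Rightarrow> 'mc) \<Rightarrow> bool" where
  "pointwise_lan A B C iO iM fO fM PhiO PhiM \<longleftrightarrow>
     (\<exists>L :: 'ob \<Rightarrow> ('oa \<times> 'mb) \<Rightarrow> 'mc.
        (\<forall>b\<in>Ob B. is_colimit C (comma A B iO iM b) (fO \<circ> fst) fM (PhiO b) (L b)) \<and>
        (\<forall>b\<in>Ob B. \<forall>b'\<in>Ob B. \<forall>g\<in>Hom B b b'. \<forall>j\<in>Ob (comma A B iO iM b).
            Comp C (PhiM g) (L b j) = L b' (fst j, Comp B g (snd j))))"

definition Gcat :: "(('v,'p,'s,'d) graph, 'v \<Rightarrow> 'v) category" where
  "Gcat = \<lparr>Ob = {G. wf_graph G},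
     Hom = (\<lambda>G H. {R. bij R \<and> subgraph (rename R G) H}),
     Comp = (\<circ>)\<rparr>"

definition Dcat :: "nat \<Rightarrow> (('v,'p,'s,'d) graph \<times> 'v set, 'v \<Rightarrow> 'v) category" where
  "Dcat r = \<lparr>Ob = {(H, {c}) | H c. (H, c) \<in> disks r} \<union> {(empty_graph, {})},
     Hom = (\<lambda>(H1, C1) (H2, C2). {R \<in> Hom Gcat H1 H2. R ` C1 \<subseteq> C2}),
     Comp = (\<circ>)\<rparr>"

definition ftildeO :: "(('v,'p,'s,'d) graph \<times> 'v \<Rightarrow> ('v,'p,'s,'d) graph)
                        \<Rightarrow> ('v,'p,'s,'d) graph \<times> 'v set \<Rightarrow> ('v,'p,'s,'d) graph" where
  "ftildeO f HC = (if snd HC = {} then empty_graph else f (fst HC, the_elem (snd HC)))"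

end

theory Submission
  imports Defs
begin

lemma inj_pm: "inj R \<Longrightarrow> inj (\<lambda>(v::'v,p::'p). (R v, p))"
  by (auto simp: inj_def)

lemma rename_comp:
  assumes "bij a" "bij b"
  shows "rename (a \<circ> b) G = rename a (rename b G)"
  using assms by (simp add: rename_def o_inv_distrib image_image case_prod_beta)

lemma rename_id: "rename id G = G"
  by (simp add: rename_def)

lemma rename_mono: "subgraph X Y \<Longrightarrow> subgraph (rename R X) (rename R Y)"
  unfolding subgraph_def rename_def map_le_def by (auto simp: dom_def)

lemma rename_empty: "rename R empty_graph = empty_graph"
  by (simp add: rename_def empty_graph_def)

lemma subgraph_empty: "subgraph empty_graph G"
  by (simp add: subgraph_def empty_graph_def)

lemma subgraph_trans: "subgraph A B \<Longrightarrow> subgraph B C \<Longrightarrow> subgraph A C"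
  unfolding subgraph_def by (auto intro: map_le_trans)

lemma subgraph_refl: "subgraph A A"
  unfolding subgraph_def by auto

lemma wf_rename:
  assumes R: "bij R" and G: "wf_graph G" shows "wf_graph (rename R G)"
proof -
  have injR: "inj R" using R bij_is_inj by auto
  have ip: "inj (\<lambda>(v::'a,p::'b). (R v, p))" using inj_pm[OF injR] .
  have RinvR: "\<And>v. R (inv R v) = v" using R by (meson bij_inv_eq_iff)
  show ?thesis
  unfolding wf_graph_def
  proof (intro conjI ballI impI)
    show "countable (gV (rename R G))" using G by (simp add: rename_def wf_graph_def)
  next
    fix e assume "e \<in> gE (rename R G)"
    then obtain e0 where e0: "e0 \<in> gE G" "e = (\<lambda>(v,p). (R v, p)) ` e0" unfolding rename_def by simp blast
    have "\<forall>e\<in>gE G. \<exists>a b. a \<noteq> b \<and> e = {a, b} \<and> fst a \<in> gV G \<and> fst b \<in> gV G"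
      using G unfolding wf_graph_def by simp
    then obtain a b where ab: "a \<noteq> b" "e0 = {a,b}" "fst a \<in> gV G" "fst b \<in> gV G"
      using e0(1) by blast
    obtain va pa vb pb where ab2: "a = (va,pa)" "b = (vb,pb)" by fastforce
    have ne: "(R va, pa) \<noteq> (R vb, pb)" using injR ab(1) ab2 by (auto dest: injD)
    have eq0: "e = (\<lambda>(v,p). (R v, p)) ` {(va,pa),(vb,pb)}" by (simp only: e0(2) ab(2) ab2)
    have eq: "e = {(R va, pa), (R vb, pb)}" unfolding eq0 by simp
    show "\<exists>a b. a \<noteq> b \<and> e = {a, b} \<and> fst a \<in> gV (rename R G) \<and> fst b \<in> gV (rename R G)"
      apply (rule exI[of _ "(R va, pa)"], rule exI[of _ "(R vb, pb)"])
      using ne eq ab(3,4) ab2 by (simp add: rename_def)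
  next
    fix e1 e2 assume "e1 \<in> gE (rename R G)" "e2 \<in> gE (rename R G)" "e1 \<noteq> e2"
    then obtain e1' e2' where "e1' \<in> gE G" "e2' \<in> gE G" "e1 = (\<lambda>(v,p). (R v, p)) ` e1'"
       "e2 = (\<lambda>(v,p). (R v, p)) ` e2'" unfolding rename_def by simp blast
    moreover have "e1' \<noteq> e2'" using calculation \<open>e1 \<noteq> e2\<close> by auto
    moreover have "\<forall>e1\<in>gE G. \<forall>e2\<in>gE G. e1 \<noteq> e2 \<longrightarrow> e1 \<inter> e2 = {}" using G unfolding wf_graph_def by simp
    ultimately have "e1' \<inter> e2' = {}" by blast
    then show "e1 \<inter> e2 = {}" using ip \<open>e1 = _\<close> \<open>e2 = _\<close> by (simp add: image_Int[symmetric])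
  next
    show "dom (gsig (rename R G)) \<subseteq> gV (rename R G)"
    proof
      fix v assume "v \<in> dom (gsig (rename R G))"
      then have "inv R v \<in> gV G" using G unfolding wf_graph_def by (auto simp: rename_def)
      then show "v \<in> gV (rename R G)" using RinvR by (auto simp: rename_def intro: image_eqI[of _ _ "inv R v"])
    qed
  next
    show "dom (gdel (rename R G)) \<subseteq> gE (rename R G)"
    proof
      fix e assume "e \<in> dom (gdel (rename R G))"
      then have "(\<lambda>(v,p). (inv R v, p)) ` e \<in> gE G" using G unfolding wf_graph_def by (auto simp: rename_def)
      have h: "(\<lambda>(v,p). (R v, p)) \<circ> (\<lambda>(v,p). (inv R v, p)) = id"
        using RinvR by (auto simp: fun_eq_iff)
      have bk: "(\<lambda>(v,p). (R v, p)) ` ((\<lambda>(v,p). (inv R v, p)) ` e) = e"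
        by (simp only: image_comp h image_id id_apply)
      have "(\<lambda>e. (\<lambda>(v,p). (R v, p)) ` e) ((\<lambda>(v,p). (inv R v, p)) ` e) \<in> (\<lambda>e. (\<lambda>(v,p). (R v, p)) ` e) ` gE G"
        by (rule imageI) fact
      then show "e \<in> gE (rename R G)" unfolding rename_def graph.select_convs bk .
    qed
  qed
qed


lemma relpow_mono': "(A::'a rel) \<subseteq> B \<Longrightarrow> (x,y) \<in> A ^^ k \<Longrightarrow> (x,y) \<in> B ^^ k"
proof (induction k arbitrary: y)
  case 0
  from 0(2) have "x = y" by (rule relpow_0_E)
  then show ?case using relpow_0_I by metis
next
  case (Suc k) then show ?case by (blast elim: relpow_Suc_E intro: relpow_Suc_I)
qed

lemma adj_mono: "subgraph K G \<Longrightarrow> adj_rel K \<subseteq> adj_rel G"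
  unfolding adj_rel_def subgraph_def by blast

lemma dist_le_mono: "subgraph K G \<Longrightarrow> dist_le K c n v \<Longrightarrow> dist_le G c n v"
  unfolding dist_le_def using adj_mono[of K G] relpow_mono'[of "adj_rel K" "adj_rel G"]
  by (auto simp: subgraph_def)

lemma disk_mono:
  assumes "subgraph K G" shows "subgraph (disk r K c) (disk r G c)"
proof -
  have d: "\<And>n v. dist_le K c n v \<Longrightarrow> dist_le G c n v" using dist_le_mono[OF assms] .
  have s: "gV K \<subseteq> gV G" "gE K \<subseteq> gE G" "gsig K \<subseteq>\<^sub>m gsig G" "gdel K \<subseteq>\<^sub>m gdel G"
    using assms unfolding subgraph_def by auto
  show ?thesis unfolding subgraph_def disk_def graph.select_convs
  proof (intro conjI)
    show "{v \<in> gV K. dist_le K c (Suc r) v} \<subseteq> {v \<in> gV G. dist_le G c (Suc r) v}" using s d by blast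
    show "{e \<in> gE K. \<exists>(v, p)\<in>e. dist_le K c r v} \<subseteq> {e \<in> gE G. \<exists>(v, p)\<in>e. dist_le G c r v}"
      using s d by blast
    show "gsig K |` {v. dist_le K c r v} \<subseteq>\<^sub>m gsig G |` {v. dist_le G c r v}"
      using s(3) d unfolding map_le_def restrict_map_def by (auto simp: dom_def split: if_splits)
    show "gdel K |` {e \<in> gE K. \<exists>(v, p)\<in>e. dist_le K c r v} \<subseteq>\<^sub>m gdel G |` {e \<in> gE G. \<exists>(v, p)\<in>e. dist_le G c r v}"
      using s(2,4) d unfolding map_le_def restrict_map_def by (auto simp: dom_def split: if_splits) 
  qed
qed

lemma dist_le_step:
  assumes "dist_le G c n w" "(w,v) \<in> adj_rel G" shows "dist_le G c (Suc n) v"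
  using assms unfolding dist_le_def by (meson Suc_le_mono relpow_Suc_I)

lemma wf_disk:
  assumes G: "wf_graph G" shows "wf_graph (disk r G c)"
proof -
  have E: "\<forall>e\<in>gE G. \<exists>a b. a \<noteq> b \<and> e = {a, b} \<and> fst a \<in> gV G \<and> fst b \<in> gV G"
    and D: "\<forall>e1\<in>gE G. \<forall>e2\<in>gE G. e1 \<noteq> e2 \<longrightarrow> e1 \<inter> e2 = {}"
    and S: "dom (gsig G) \<subseteq> gV G" and L: "dom (gdel G) \<subseteq> gE G" and C: "countable (gV G)"
    using G unfolding wf_graph_def by auto
  have up: "\<And>v. dist_le G c r v \<Longrightarrow> dist_le G c (Suc r) v" unfolding dist_le_def by (meson le_SucI)
  show ?thesis unfolding wf_graph_def
  proof (intro conjI ballI impI)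
    show "countable (gV (disk r G c))" using C unfolding disk_def by (auto intro: countable_subset)
  next
    fix e assume "e \<in> gE (disk r G c)"
    then have e: "e \<in> gE G" "\<exists>(v, p)\<in>e. dist_le G c r v" unfolding disk_def by auto
    obtain a b where ab: "a \<noteq> b" "e = {a,b}" "fst a \<in> gV G" "fst b \<in> gV G" using E e(1) by blast
    obtain va pa vb pb where ab2: "a = (va,pa)" "b = (vb,pb)" by fastforce
    have eq: "e = {(va,pa),(vb,pb)}" using ab(2) ab2 by simp
    have inV: "va \<in> gV G" "vb \<in> gV G" using ab(3,4) ab2 by auto
    have e3: "{(va,pa),(vb,pb)} \<in> gE G" "{(vb,pb),(va,pa)} \<in> gE G" using eq e(1) by (auto simp: insert_commute)
    have adj1: "(va, vb) \<in> adj_rel G" unfolding adj_rel_def using inV e3(1) by blast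
    have adj2: "(vb, va) \<in> adj_rel G" unfolding adj_rel_def using inV e3(2) by blast
    have "dist_le G c r va \<or> dist_le G c r vb" using e(2) unfolding eq by auto
    then have "dist_le G c (Suc r) va \<and> dist_le G c (Suc r) vb"
      using up dist_le_step[OF _ adj1] dist_le_step[OF _ adj2] by blast
    then have "va \<in> gV (disk r G c)" "vb \<in> gV (disk r G c)"
      using inV unfolding disk_def graph.select_convs by blast+
    then show "\<exists>a b. a \<noteq> b \<and> e = {a, b} \<and> fst a \<in> gV (disk r G c) \<and> fst b \<in> gV (disk r G c)"
      using ab(1) ab2 eq by auto
  next
    fix e1 e2 assume "e1 \<in> gE (disk r G c)" "e2 \<in> gE (disk r G c)" "e1 \<noteq> e2"
    then show "e1 \<inter> e2 = {}" using D unfolding disk_def by auto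
  next
    show "dom (gsig (disk r G c)) \<subseteq> gV (disk r G c)" using S up unfolding disk_def by auto
  next
    show "dom (gdel (disk r G c)) \<subseteq> gE (disk r G c)" using L unfolding disk_def by auto
  qed
qed

lemma disk_in_disks: "wf_graph G \<Longrightarrow> c \<in> gV G \<Longrightarrow> (disk r G c, c) \<in> disks r"
  unfolding disks_def by blast

lemma disk_self_path:
  assumes "k \<le> Suc r" "(c,v) \<in> adj_rel G ^^ k" "c \<in> gV G"
  shows "(c,v) \<in> adj_rel (disk r G c) ^^ k"
  using assms
proof (induction k arbitrary: v)
  case 0 then show ?case by simp
next
  case (Suc k)
  from Suc.prems(2) obtain w where w: "(c,w) \<in> adj_rel G ^^ k" "(w,v) \<in> adj_rel G"
    by (blast elim: relpow_Suc_E)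
  have IH: "(c,w) \<in> adj_rel (disk r G c) ^^ k" using Suc.IH[OF _ w(1) Suc.prems(3)] Suc.prems(1) by simp
  obtain p q where pq: "{(w,p),(v,q)} \<in> gE G" "w \<in> gV G" "v \<in> gV G" using w(2) unfolding adj_rel_def by blast
  have kr: "k \<le> r" "k \<le> Suc r" using Suc.prems(1) by auto
  have dw: "dist_le G c r w" using w(1) Suc.prems(3) kr unfolding dist_le_def by blast
  have dw': "dist_le G c (Suc r) w" using w(1) Suc.prems(3) kr unfolding dist_le_def by blast
  have dv: "dist_le G c (Suc r) v" using Suc.prems unfolding dist_le_def by blast
  have "{(w,p),(v,q)} \<in> gE (disk r G c)" using pq dw unfolding disk_def by auto
  moreover have "w \<in> gV (disk r G c)" "v \<in> gV (disk r G c)" using pq dw' dv unfolding disk_def by auto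
  ultimately have "(w,v) \<in> adj_rel (disk r G c)" unfolding adj_rel_def by blast
  then show ?case by (rule relpow_Suc_I[OF IH])
qed

lemma disk_self_dist:
  assumes "n \<le> Suc r" "dist_le G c n v" shows "dist_le (disk r G c) c n v"
proof -
  have c: "c \<in> gV G" using assms unfolding dist_le_def by auto
  have "dist_le G c (Suc r) c" using c unfolding dist_le_def by (auto intro: exI[of _ 0])
  then have "c \<in> gV (disk r G c)" using c unfolding disk_def by auto
  then show ?thesis using assms disk_self_path[of _ r c v G] c unfolding dist_le_def
    by (meson order_trans)
qed

lemma disk_sub_self:
  "subgraph (disk r G c) (disk r (disk r G c) c)"
proof -
  let ?D = "disk r G c"
  have d1: "\<And>v. dist_le G c r v \<Longrightarrow> dist_le ?D c r v" using disk_self_dist[of r r G c] by simp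
  have d2: "\<And>v. dist_le G c (Suc r) v \<Longrightarrow> dist_le ?D c (Suc r) v" using disk_self_dist[of "Suc r" r G c] by simp
  note d = d1 d2
  show ?thesis unfolding subgraph_def
  proof (intro conjI)
    show "gV ?D \<subseteq> gV (disk r ?D c)" using d(2) unfolding disk_def[of r ?D] by (auto simp: disk_def)
    show "gE ?D \<subseteq> gE (disk r ?D c)" using d(1) unfolding disk_def[of r ?D] by (auto simp: disk_def)
    show "gsig ?D \<subseteq>\<^sub>m gsig (disk r ?D c)" using d(1) unfolding disk_def[of r ?D]
      by (auto simp: disk_def map_le_def restrict_map_def dom_def split: if_splits)
    show "gdel ?D \<subseteq>\<^sub>m gdel (disk r ?D c)" using d(1) unfolding disk_def[of r ?D]
      by (auto simp: disk_def map_le_def restrict_map_def dom_def split: if_splits)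
  qed
qed

lemma union_sig: "gsig (graph_Union S) v = (if \<exists>G\<in>S. gsig G v \<noteq> None then gsig (SOME G. G \<in> S \<and> gsig G v \<noteq> None) v else None)"
  by (simp only: graph_Union_def graph.select_convs)

lemma union_del: "gdel (graph_Union S) v = (if \<exists>G\<in>S. gdel G v \<noteq> None then gdel (SOME G. G \<in> S \<and> gdel G v \<noteq> None) v else None)"
  by (simp only: graph_Union_def graph.select_convs)

lemma union_V: "gV (graph_Union S) = \<Union>(gV ` S)"
  by (simp only: graph_Union_def graph.select_convs)

lemma union_E: "gE (graph_Union S) = \<Union>(gE ` S)"
  by (simp only: graph_Union_def graph.select_convs)

lemma union_upper:
  assumes "s \<in> S" "\<forall>a\<in>S. \<forall>b\<in>S. consistent a b" shows "subgraph s (graph_Union S)"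
proof -
  have gs: "gsig s v = gsig (graph_Union S) v" if "gsig s v \<noteq> None" for v
  proof -
    have ex: "\<exists>G\<in>S. gsig G v \<noteq> None" using assms(1) that by blast
    then have ex': "\<exists>G. G \<in> S \<and> gsig G v \<noteq> None" by blast
    define G0 where "G0 = (SOME G. G \<in> S \<and> gsig G v \<noteq> None)"
    have G: "G0 \<in> S \<and> gsig G0 v \<noteq> None" using someI_ex[OF ex'] unfolding G0_def .
    have "consistent s G0" using assms(2) assms(1) G by blast
    then have "\<forall>x. gsig s x \<noteq> None \<and> gsig G0 x \<noteq> None \<longrightarrow> gsig s x = gsig G0 x"
      unfolding consistent_def by blast
    then have "gsig s v = gsig G0 v" using that G by blast
    then show ?thesis using ex union_sig[of S v] G0_def by simp
  qed
  have gd: "gdel s v = gdel (graph_Union S) v" if "gdel s v \<noteq> None" for v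
  proof -
    have ex: "\<exists>G\<in>S. gdel G v \<noteq> None" using assms(1) that by blast
    then have ex': "\<exists>G. G \<in> S \<and> gdel G v \<noteq> None" by blast
    define G0 where "G0 = (SOME G. G \<in> S \<and> gdel G v \<noteq> None)"
    have G: "G0 \<in> S \<and> gdel G0 v \<noteq> None" using someI_ex[OF ex'] unfolding G0_def .
    have "consistent s G0" using assms(2) assms(1) G by blast
    then have "\<forall>x. gdel s x \<noteq> None \<and> gdel G0 x \<noteq> None \<longrightarrow> gdel s x = gdel G0 x"
      unfolding consistent_def by blast
    then have "gdel s v = gdel G0 v" using that G by blast
    then show ?thesis using ex union_del[of S v] G0_def by simp
  qed
  have "gV s \<subseteq> gV (graph_Union S)" "gE s \<subseteq> gE (graph_Union S)"
    using assms(1) unfolding union_V union_E by blast+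
  moreover have "gsig s \<subseteq>\<^sub>m gsig (graph_Union S)" unfolding map_le_def using gs by blast
  moreover have "gdel s \<subseteq>\<^sub>m gdel (graph_Union S)" unfolding map_le_def using gd by blast
  ultimately show ?thesis unfolding subgraph_def by blast
qed

lemma union_least:
  assumes "\<forall>s\<in>S. subgraph s Y" shows "subgraph (graph_Union S) Y"
proof -
  have gs: "gsig (graph_Union S) v = gsig Y v" if "gsig (graph_Union S) v \<noteq> None" for v
  proof -
    have ex: "\<exists>G\<in>S. gsig G v \<noteq> None" using that union_sig[of S v] by (auto split: if_splits)
    then have ex': "\<exists>G. G \<in> S \<and> gsig G v \<noteq> None" by blast
    let ?G = "SOME G. G \<in> S \<and> gsig G v \<noteq> None"
    have G: "?G \<in> S \<and> gsig ?G v \<noteq> None" using someI_ex[OF ex'] .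
    then have "subgraph ?G Y" using assms by blast
    then have "gsig ?G v = gsig Y v" using G unfolding subgraph_def map_le_def by blast
    then show ?thesis using ex union_sig[of S v] by simp
  qed
  have gd: "gdel (graph_Union S) v = gdel Y v" if "gdel (graph_Union S) v \<noteq> None" for v
  proof -
    have ex: "\<exists>G\<in>S. gdel G v \<noteq> None" using that union_del[of S v] by (auto split: if_splits)
    then have ex': "\<exists>G. G \<in> S \<and> gdel G v \<noteq> None" by blast
    let ?G = "SOME G. G \<in> S \<and> gdel G v \<noteq> None"
    have G: "?G \<in> S \<and> gdel ?G v \<noteq> None" using someI_ex[OF ex'] .
    then have "subgraph ?G Y" using assms by blast
    then have "gdel ?G v = gdel Y v" using G unfolding subgraph_def map_le_def by blast
    then show ?thesis using ex union_del[of S v] by simp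
  qed
  have "gV (graph_Union S) \<subseteq> gV Y" "gE (graph_Union S) \<subseteq> gE Y"
    using assms unfolding subgraph_def union_V union_E by blast+
  moreover have "gsig (graph_Union S) \<subseteq>\<^sub>m gsig Y" unfolding map_le_def using gs by blast
  moreover have "gdel (graph_Union S) \<subseteq>\<^sub>m gdel Y" unfolding map_le_def using gd by blast
  ultimately show ?thesis unfolding subgraph_def by blast
qed


lemma disk_sub: "subgraph (disk r G c) G"
  unfolding subgraph_def disk_def map_le_def by (auto simp: restrict_map_def dom_def split: if_splits)

lemma CGD_cons:
  assumes "local_rule r f" "wf_graph G"
  shows "\<forall>a\<in>{f (disk r G v, v) | v. v \<in> gV G}. \<forall>b\<in>{f (disk r G v, v) | v. v \<in> gV G}. consistent a b"
proof -
  have "\<forall>G. wf_graph G \<longrightarrow> (\<forall>u\<in>gV G. \<forall>v\<in>gV G. consistent (f (disk r G u, u)) (f (disk r G v, v)))"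
    using assms(1) unfolding local_rule_def by blast
  then show ?thesis using assms(2) by blast
qed

lemma CGD_upper:
  assumes "local_rule r f" "wf_graph G" "v \<in> gV G"
  shows "subgraph (f (disk r G v, v)) (CGD r f G)"
  unfolding CGD_def by (rule union_upper[OF _ CGD_cons[OF assms(1,2)]]) (use assms(3) in blast)

lemma wf_CGD:
  assumes L: "local_rule r f" and G: "wf_graph G" shows "wf_graph (CGD r f G)"
proof -
  let ?S = "{f (disk r G v, v) | v. v \<in> gV G}"
  have wff: "\<forall>D\<in>disks r. wf_graph (f D)" using L unfolding local_rule_def by blast
  have fin: "\<forall>D\<in>disks r. finite (gV (f D))" using L unfolding local_rule_def by blast
  have wfS: "\<And>s. s \<in> ?S \<Longrightarrow> wf_graph s" using wff disk_in_disks[OF G] by blast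
  have cons: "\<forall>a\<in>?S. \<forall>b\<in>?S. consistent a b" using CGD_cons[OF L G] .
  have V: "gV (CGD r f G) = (\<Union>s\<in>?S. gV s)" unfolding CGD_def union_V ..
  have Ed: "gE (CGD r f G) = (\<Union>s\<in>?S. gE s)" unfolding CGD_def union_E ..
  show ?thesis unfolding wf_graph_def
  proof (intro conjI ballI impI)
    have "(\<Union>s\<in>?S. gV s) = (\<Union>v\<in>gV G. gV (f (disk r G v, v)))" by blast
    moreover have "countable (\<Union>v\<in>gV G. gV (f (disk r G v, v)))"
    proof (rule countable_UN)
      show "countable (gV G)" using G unfolding wf_graph_def by blast
      fix v assume "v \<in> gV G"
      then have "finite (gV (f (disk r G v, v)))" using fin disk_in_disks[OF G] by blast
      then show "countable (gV (f (disk r G v, v)))" by (rule countable_finite)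
    qed
    ultimately show "countable (gV (CGD r f G))" unfolding V by simp
  next
    fix e assume "e \<in> gE (CGD r f G)"
    then obtain s where s: "s \<in> ?S" "e \<in> gE s" unfolding Ed by blast
    have "\<forall>e\<in>gE s. \<exists>a b. a \<noteq> b \<and> e = {a, b} \<and> fst a \<in> gV s \<and> fst b \<in> gV s"
      using wfS[OF s(1)] unfolding wf_graph_def by blast
    then obtain a b where "a \<noteq> b" "e = {a, b}" "fst a \<in> gV s" "fst b \<in> gV s" using s(2) by blast
    moreover have "gV s \<subseteq> gV (CGD r f G)" unfolding V using s(1) by blast
    ultimately show "\<exists>a b. a \<noteq> b \<and> e = {a, b} \<and> fst a \<in> gV (CGD r f G) \<and> fst b \<in> gV (CGD r f G)"
      by blast
  next
    fix e1 e2 assume e: "e1 \<in> gE (CGD r f G)" "e2 \<in> gE (CGD r f G)" "e1 \<noteq> e2"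
    then obtain s1 s2 where s: "s1 \<in> ?S" "e1 \<in> gE s1" "s2 \<in> ?S" "e2 \<in> gE s2" unfolding Ed by blast
    have "consistent s1 s2" using cons s by blast
    then have "\<forall>e\<in>gE s1. \<forall>e'\<in>gE s2. e = e' \<or> e \<inter> e' = {}" unfolding consistent_def by blast
    then show "e1 \<inter> e2 = {}" using s e(3) by blast
  next
    show "dom (gsig (CGD r f G)) \<subseteq> gV (CGD r f G)"
    proof
      fix x assume "x \<in> dom (gsig (CGD r f G))"
      then have "gsig (graph_Union ?S) x \<noteq> None" unfolding CGD_def by blast
      then obtain s where s: "s \<in> ?S" "gsig s x \<noteq> None" using union_sig[of ?S x] by (auto split: if_splits)
      then have "x \<in> gV s" using wfS[OF s(1)] unfolding wf_graph_def by blast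
      then show "x \<in> gV (CGD r f G)" unfolding V using s(1) by blast
    qed
  next
    show "dom (gdel (CGD r f G)) \<subseteq> gE (CGD r f G)"
    proof
      fix x assume "x \<in> dom (gdel (CGD r f G))"
      then have "gdel (graph_Union ?S) x \<noteq> None" unfolding CGD_def by blast
      then obtain s where s: "s \<in> ?S" "gdel s x \<noteq> None" using union_del[of ?S x] by (auto split: if_splits)
      then have "x \<in> gE s" using wfS[OF s(1)] unfolding wf_graph_def by blast
      then show "x \<in> gE (CGD r f G)" unfolding Ed using s(1) by blast
    qed
  qed
qed

lemma CGD_mono:
  assumes L: "local_rule r f" and M: "monotonic_rule r f" and K: "wf_graph K" and G: "wf_graph G"
    and sub: "subgraph K G"
  shows "subgraph (CGD r f K) (CGD r f G)"
  unfolding CGD_def[of r f K]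
proof (rule union_least, intro ballI)
  fix s assume "s \<in> {f (disk r K v, v) | v. v \<in> gV K}"
  then obtain v where v: "s = f (disk r K v, v)" "v \<in> gV K" by blast
  have vG: "v \<in> gV G" using v(2) sub unfolding subgraph_def by blast
  have "subgraph (f (disk r K v, v)) (f (disk r G v, v))"
    using M disk_in_disks[OF K v(2)] disk_in_disks[OF G vG] disk_mono[OF sub]
    unfolding monotonic_rule_def by auto
  moreover have "subgraph (f (disk r G v, v)) (CGD r f G)" using CGD_upper[OF L G vG] .
  ultimately show "subgraph s (CGD r f G)" using v(1) subgraph_trans by blast
qed

lemma Fbar_in:
  assumes H: "\<forall>R. bij R \<longrightarrow> Conj (CGD r f) R = {Fbar R}" and R: "bij R"
  shows "bij (Fbar R)" "\<And>G. wf_graph G \<Longrightarrow> CGD r f (rename R G) = rename (Fbar R) (CGD r f G)"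
proof -
  have "Fbar R \<in> Conj (CGD r f) R" using H R by blast
  then show "bij (Fbar R)" "\<And>G. wf_graph G \<Longrightarrow> CGD r f (rename R G) = rename (Fbar R) (CGD r f G)"
    unfolding Conj_def by blast+
qed

lemma Fbar_unique:
  assumes H: "\<forall>R. bij R \<longrightarrow> Conj (CGD r f) R = {Fbar R}" and R: "bij R" and R': "bij R'"
    and eq: "\<And>G. wf_graph G \<Longrightarrow> CGD r f (rename R G) = rename R' (CGD r f G)"
  shows "R' = Fbar R"
proof -
  have "R' \<in> Conj (CGD r f) R" unfolding Conj_def using R' eq by blast
  then show ?thesis using H R by blast
qed

lemma Fbar_comp:
  fixes f :: "('v,'p,'s,'d) graph \<times> 'v \<Rightarrow> ('v,'p,'s,'d) graph" and a b :: "'v \<Rightarrow> 'v"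
  assumes H: "\<forall>R. bij R \<longrightarrow> Conj (CGD r f) R = {Fbar R}" and a: "bij a" and b: "bij b"
  shows "Fbar (a \<circ> b) = Fbar a \<circ> Fbar b"
proof -
  have ab: "bij (a \<circ> b)" using bij_comp[OF b a] .
  have fa: "bij (Fbar a)" and fb: "bij (Fbar b)" using Fbar_in[OF H a] Fbar_in[OF H b] by blast+
  have "Fbar a \<circ> Fbar b = Fbar (a \<circ> b)"
  proof (rule Fbar_unique[OF H ab])
    show "bij (Fbar a \<circ> Fbar b)" using bij_comp[OF fb fa] .
    fix G :: "('v,'p,'s,'d) graph" assume G: "wf_graph G"
    have "CGD r f (rename (a \<circ> b) G) = CGD r f (rename a (rename b G))" by (rule arg_cong[OF rename_comp[OF a b, of G]])
    also have "\<dots> = rename (Fbar a) (CGD r f (rename b G))" using Fbar_in(2)[OF H a wf_rename[OF b G]] .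
    also have "\<dots> = rename (Fbar a) (rename (Fbar b) (CGD r f G))" using Fbar_in(2)[OF H b G] by simp
    also have "\<dots> = rename (Fbar a \<circ> Fbar b) (CGD r f G)" by (rule sym[OF rename_comp[OF fa fb, of "CGD r f G"]])
    finally show "CGD r f (rename (a \<circ> b) G) = rename (Fbar a \<circ> Fbar b) (CGD r f G)" .
  qed
  then show ?thesis by simp
qed

lemma Fbar_id:
  assumes H: "\<forall>R. bij R \<longrightarrow> Conj (CGD r f) R = {Fbar R}"
  shows "Fbar id = id"
proof -
  have "id = Fbar id"
    by (rule Fbar_unique[OF H bij_id bij_id]) (simp add: rename_id)
  then show ?thesis by simp
qed

lemma rename_inv_sub:
  assumes u: "bij u" and s: "subgraph (rename u X) Y" shows "subgraph X (rename (inv u) Y)"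
proof -
  have iu: "bij (inv u)" using u by (rule bij_imp_bij_inv)
  have "subgraph (rename (inv u) (rename u X)) (rename (inv u) Y)" using rename_mono[OF s] .
  moreover have "rename (inv u) (rename u X) = X"
    using rename_comp[OF iu u, of X] u by (simp add: bij_is_inj rename_id)
  ultimately show ?thesis by simp
qed

lemma rename_inv_cancel: assumes u: "bij u" shows "rename u (rename (inv u) Y) = Y"
proof -
  have "u \<circ> inv u = id" using u by (meson bij_is_surj surj_iff)
  then show ?thesis using rename_comp[OF u bij_imp_bij_inv[OF u], of Y] by (simp add: rename_id)
qed


lemma key:
  fixes f :: "('v,'p,'s,'d) graph \<times> 'v \<Rightarrow> ('v,'p,'s,'d) graph"
  assumes L: "local_rule r f" and M: "monotonic_rule r f"
    and H: "\<forall>R. bij R \<longrightarrow> Conj (CGD r f) R = {Fbar R}"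
    and D: "(H0, c) \<in> disks r" and m: "bij m" and sub: "subgraph (rename m H0) G" and G: "wf_graph G"
  shows "subgraph (rename (Fbar m) (f (H0, c))) (CGD r f G)"
proof -
  obtain G0 where G0: "H0 = disk r G0 c" "wf_graph G0" "c \<in> gV G0" using D unfolding disks_def by blast
  have wH: "wf_graph H0" using wf_disk[OF G0(2)] G0(1) by simp
  have "dist_le G0 c (Suc r) c" using G0(3) unfolding dist_le_def by (auto intro: exI[of _ 0])
  then have cH: "c \<in> gV H0" using G0 unfolding disk_def by simp
  have D2: "(disk r H0 c, c) \<in> disks r" using disk_in_disks[OF wH cH] .
  have s1: "subgraph (f (H0, c)) (f (disk r H0 c, c))"
    using M D D2 disk_sub_self[of r G0 c] G0(1) unfolding monotonic_rule_def by auto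
  have s2: "subgraph (f (H0, c)) (CGD r f H0)"
    using subgraph_trans[OF s1 CGD_upper[OF L wH cH]] .
  have s3: "subgraph (rename (Fbar m) (f (H0, c))) (rename (Fbar m) (CGD r f H0))"
    using rename_mono[OF s2] .
  have eq: "rename (Fbar m) (CGD r f H0) = CGD r f (rename m H0)"
    using Fbar_in(2)[OF H m wH] by simp
  have s4: "subgraph (CGD r f (rename m H0)) (CGD r f G)"
    using CGD_mono[OF L M wf_rename[OF m wH] G sub] .
  show ?thesis using subgraph_trans[OF s3[unfolded eq] s4] .
qed

lemma comma_Ob:
  "j \<in> Ob (comma (Dcat r) Gcat fst id G) \<longleftrightarrow>
     fst j \<in> Ob (Dcat r) \<and> bij (snd j) \<and> subgraph (rename (snd j) (fst (fst j))) G"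
  by (cases j) (simp add: comma_def Gcat_def)

lemma comma_Hom:
  "n \<in> Hom (comma (Dcat r) Gcat fst id G) (a1, m1) (a2, m2) \<longleftrightarrow>
     n \<in> Hom (Dcat r) a1 a2 \<and> m1 = m2 \<circ> n"
  by (simp add: comma_def Gcat_def)

lemma comma_Comp: "Comp (comma (Dcat r) Gcat fst id G) = (\<circ>)"
  by (simp add: comma_def Dcat_def)

lemma Dcat_Hom:
  "n \<in> Hom (Dcat r) (H1, C1) (H2, C2) \<longleftrightarrow> bij n \<and> subgraph (rename n H1) H2 \<and> n ` C1 \<subseteq> C2"
  by (simp add: Dcat_def Gcat_def)

lemma Dcat_Ob:
  "a \<in> Ob (Dcat r) \<longleftrightarrow> (\<exists>H c. a = (H, {c}) \<and> (H, c) \<in> disks r) \<or> a = (empty_graph, {})"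
  by (auto simp: Dcat_def)

lemma Gcat_simps: "Ob Gcat = {G. wf_graph G}" "Hom Gcat G H = {R. bij R \<and> subgraph (rename R G) H}"
  "Comp Gcat = (\<circ>)"
  by (simp_all add: Gcat_def)


theorem proposition4p23:
  fixes f :: "('v,'p::finite,'s,'d) graph \<times> 'v \<Rightarrow> ('v,'p,'s,'d) graph"
    and r :: nat
    and Fbar :: "('v \<Rightarrow> 'v) \<Rightarrow> ('v \<Rightarrow> 'v)"
  assumes "uncountable (UNIV :: 'v set)"
    and "local_rule r f"
    and "monotonic_rule r f"
    and "\<forall>R. bij R \<longrightarrow> Conj (CGD r f) R = {Fbar R}"
  shows "pointwise_lan (Dcat r) Gcat Gcat fst id (ftildeO f) Fbar (CGD r f) Fbar"
proof -
  note L = assms(2) and M = assms(3) and H = assms(4)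
  define LL :: "('v,'p,'s,'d) graph \<Rightarrow> (('v,'p,'s,'d) graph \<times> 'v set) \<times> ('v \<Rightarrow> 'v) \<Rightarrow> ('v \<Rightarrow> 'v)"
    where "LL = (\<lambda>G j. Fbar (snd j))"
  have Fid: "Fbar id = id" using Fbar_id[OF H] .
  have empOb: "(empty_graph, {}) \<in> Ob (Dcat r)" by (simp add: Dcat_Ob)
  have colim: "is_colimit Gcat (comma (Dcat r) Gcat fst id G) (ftildeO f \<circ> fst) Fbar (CGD r f G) (LL G)"
    if G: "wf_graph G" for G
  proof -
    let ?J = "comma (Dcat r) Gcat fst id G"
    have legs: "LL G j \<in> Hom Gcat ((ftildeO f \<circ> fst) j) (CGD r f G)" if j: "j \<in> Ob ?J" for j
    proof -
      obtain a m where jam: "j = (a, m)" by fastforce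
      have a: "a \<in> Ob (Dcat r)" and m: "bij m" and sub: "subgraph (rename m (fst a)) G"
        using j jam comma_Ob[of j r G] by auto
      have bF: "bij (Fbar m)" using Fbar_in(1)[OF H m] .
      from a consider (disk) H0 c where "a = (H0, {c})" "(H0, c) \<in> disks r" | (emp) "a = (empty_graph, {})"
        unfolding Dcat_Ob by blast
      then show ?thesis
      proof cases
        case disk
        have "ftildeO f a = f (H0, c)" using disk by (simp add: ftildeO_def)
        moreover have "subgraph (rename (Fbar m) (f (H0, c))) (CGD r f G)"
          using key[OF L M H disk(2) m _ G] sub disk by simp
        ultimately show ?thesis using bF jam by (simp add: LL_def Gcat_simps)
      next
        case emp
        have "ftildeO f a = empty_graph" using emp by (simp add: ftildeO_def)
        then show ?thesis using bF jam by (simp add: LL_def Gcat_simps rename_empty subgraph_empty)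
      qed
    qed
    have coc: "cocone Gcat ?J (ftildeO f \<circ> fst) Fbar (CGD r f G) (LL G)"
      unfolding cocone_def
    proof (intro conjI ballI)
      show "CGD r f G \<in> Ob Gcat" using wf_CGD[OF L G] by (simp add: Gcat_simps)
    next
      fix j assume "j \<in> Ob ?J" then show "LL G j \<in> Hom Gcat ((ftildeO f \<circ> fst) j) (CGD r f G)" by (rule legs)
    next
      fix j1 j2 n assume j1: "j1 \<in> Ob ?J" and j2: "j2 \<in> Ob ?J" and n: "n \<in> Hom ?J j1 j2"
      obtain a1 m1 a2 m2 where js: "j1 = (a1, m1)" "j2 = (a2, m2)" by fastforce
      have nn: "n \<in> Hom (Dcat r) a1 a2" "m1 = m2 \<circ> n" using n js comma_Hom[of n r G a1 m1 a2 m2] by metis+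
      have bn: "bij n" using nn(1) by (cases a1, cases a2) (simp add: Dcat_Hom)
      have bm2: "bij m2" using j2 js comma_Ob[of j2 r G] by auto
      show "Comp Gcat (LL G j2) (Fbar n) = LL G j1"
        using Fbar_comp[OF H bm2 bn] js nn(2) by (simp add: LL_def Gcat_simps)
    qed
    show ?thesis unfolding is_colimit_def
    proof (intro conjI allI impI)
      show "cocone Gcat ?J (ftildeO f \<circ> fst) Fbar (CGD r f G) (LL G)" by (rule coc)
    next
      fix Y MM assume MM: "cocone Gcat ?J (ftildeO f \<circ> fst) Fbar Y MM"
      have Mleg: "\<And>j. j \<in> Ob ?J \<Longrightarrow> MM j \<in> Hom Gcat ((ftildeO f \<circ> fst) j) Y"
        using MM unfolding cocone_def by blast
      have Mcomm: "\<And>j1 j2 n. j1 \<in> Ob ?J \<Longrightarrow> j2 \<in> Ob ?J \<Longrightarrow> n \<in> Hom ?J j1 j2 \<Longrightarrow> MM j2 \<circ> Fbar n = MM j1"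
        using MM unfolding cocone_def by (simp add: Gcat_simps)
      define e0 where "e0 = ((empty_graph :: ('v,'p,'s,'d) graph, {} :: 'v set), id :: 'v \<Rightarrow> 'v)"
      have emOb: "((empty_graph, {}), m) \<in> Ob ?J" if "bij m" for m
        using that empOb by (simp add: comma_Ob rename_empty subgraph_empty)
      have e0Ob: "e0 \<in> Ob ?J" using emOb[of id] by (simp add: e0_def)
      define u where "u = MM e0"
      have A: "MM j = u \<circ> Fbar (snd j)" if j: "j \<in> Ob ?J" for j
      proof -
        obtain a m where jam: "j = (a, m)" by fastforce
        obtain Ha Ca where aa: "a = (Ha, Ca)" by fastforce
        have m: "bij m" using j jam comma_Ob[of j r G] by auto
        have emj: "((empty_graph, {}), m) \<in> Ob ?J" using emOb[OF m] .
        have n1: "m \<in> Hom ?J ((empty_graph, {}), m) e0"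
          using m by (simp add: e0_def comma_Hom Dcat_Hom rename_empty subgraph_empty)
        have i1: "MM e0 \<circ> Fbar m = MM ((empty_graph, {}), m)" using Mcomm[OF emj e0Ob n1] .
        have n2: "id \<in> Hom ?J ((empty_graph, {}), m) j"
          using jam aa by (simp add: comma_Hom Dcat_Hom rename_empty subgraph_empty)
        have i2: "MM j \<circ> Fbar id = MM ((empty_graph, {}), m)" using Mcomm[OF emj j n2] .
        show ?thesis using i1 i2 Fid jam by (simp add: u_def)
      qed
      have bu: "bij u" using Mleg[OF e0Ob] by (simp add: u_def Gcat_simps)
      have uHom: "u \<in> Hom Gcat (CGD r f G) Y"
      proof -
        have "subgraph (CGD r f G) (rename (inv u) Y)"
          unfolding CGD_def
        proof (rule union_least, intro ballI)
          fix s assume "s \<in> {f (disk r G v, v) | v. v \<in> gV G}"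
          then obtain v where v: "s = f (disk r G v, v)" "v \<in> gV G" by blast
          define jv where "jv = ((disk r G v, {v}), id :: 'v \<Rightarrow> 'v)"
          have "(disk r G v, {v}) \<in> Ob (Dcat r)" using disk_in_disks[OF G v(2)] by (simp add: Dcat_Ob)
          then have jv: "jv \<in> Ob ?J" by (simp add: jv_def comma_Ob rename_id disk_sub)
          have "MM jv = u" using A[OF jv] Fid by (simp add: jv_def)
          moreover have "MM jv \<in> Hom Gcat (f (disk r G v, v)) Y"
            using Mleg[OF jv] by (simp add: jv_def ftildeO_def)
          ultimately have "subgraph (rename u s) Y" using v(1) by (simp add: Gcat_simps)
          then show "subgraph s (rename (inv u) Y)" using rename_inv_sub[OF bu] by blast
        qed
        then have "subgraph (rename u (CGD r f G)) (rename u (rename (inv u) Y))" by (rule rename_mono)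
        then have "subgraph (rename u (CGD r f G)) Y" by (simp only: rename_inv_cancel[OF bu])
        then show ?thesis using bu by (simp add: Gcat_simps)
      qed
      show "\<exists>!u. u \<in> Hom Gcat (CGD r f G) Y \<and> (\<forall>j\<in>Ob ?J. Comp Gcat u (LL G j) = MM j)"
      proof (rule ex1I[of _ u])
        show "u \<in> Hom Gcat (CGD r f G) Y \<and> (\<forall>j\<in>Ob ?J. Comp Gcat u (LL G j) = MM j)"
          using uHom A by (simp add: Gcat_simps LL_def)
      next
        fix u' assume "u' \<in> Hom Gcat (CGD r f G) Y \<and> (\<forall>j\<in>Ob ?J. Comp Gcat u' (LL G j) = MM j)"
        then have "\<forall>j\<in>Ob ?J. u' \<circ> Fbar (snd j) = MM j" by (simp add: Gcat_simps LL_def)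
        then have "u' \<circ> Fbar (snd e0) = MM e0" using e0Ob by blast
        then have "u' \<circ> Fbar id = MM e0" by (simp add: e0_def)
        then show "u' = u" using Fid by (simp add: u_def)
      qed
    qed
  qed
  show ?thesis unfolding pointwise_lan_def
  proof (rule exI[of _ LL], intro conjI ballI)
    fix G :: "('v,'p,'s,'d) graph" assume "G \<in> Ob Gcat"
    then show "is_colimit Gcat (comma (Dcat r) Gcat fst id G) (ftildeO f \<circ> fst) Fbar (CGD r f G) (LL G)"
      using colim by (simp add: Gcat_simps)
  next
    fix G G' :: "('v,'p,'s,'d) graph" and g j assume G: "G \<in> Ob Gcat" and G': "G' \<in> Ob Gcat" and g: "g \<in> Hom Gcat G G'"
      and j: "j \<in> Ob (comma (Dcat r) Gcat fst id G)"
    have bg: "bij g" using g by (simp add: Gcat_simps)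
    have bj: "bij (snd j)" using j comma_Ob by blast
    show "Comp Gcat (Fbar g) (LL G j) = LL G' (fst j, Comp Gcat g (snd j))"
      using Fbar_comp[OF H bg bj] by (simp add: Gcat_simps LL_def)
  qed
qed

end
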